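(* Let $G$ be a finite simple graph on $n$ vertices having $t\geq 2$ cut vertices. Then $\mathrm{nRel}(G;p)$ has at least one fixed point in $(0,1)$, i.e. there exists $p\in(0,1)$ with $\mathrm{nRel}(G;p)=p$.
   Context: For a graph $G$ on $n$ vertices, a connected set is a nonempty vertex subset $C$ such that the induced subgraph $G[C]$ is connected. The node reliability of $G$ is the polynomial \[ \mathrm{nRel}(G;p)=\sum_{C}p^{|C|}(1-p)^{n-|C|}, \] the sum over all connected sets $C$ of $G$. *)

theory Defs
  imports Complex_Main
begin

definition simple_graph :: "'a set \<Rightarrow> ('a \<Rightarrow> 'a \<Rightarrow> bool) \<Rightarrow> bool" where
  "simple_graph V E \<longleftrightarrow> finite V \<and> (\<forall>u v. E u v \<longrightarrow> E v u)
     \<and> (\<forall>v. \<not> E v v) \<and> (\<forall>u v. E u v \<longrightarrow> u \<in> V \<and> v \<in> V)"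

definition reach_in :: "('a \<Rightarrow> 'a \<Rightarrow> bool) \<Rightarrow> 'a set \<Rightarrow> 'a \<Rightarrow> 'a \<Rightarrow> bool" where
  "reach_in E S = (\<lambda>x y. x \<in> S \<and> y \<in> S \<and> E x y)\<^sup>*\<^sup>*"

definition connected_set :: "('a \<Rightarrow> 'a \<Rightarrow> bool) \<Rightarrow> 'a set \<Rightarrow> bool" where
  "connected_set E C \<longleftrightarrow> C \<noteq> {} \<and> (\<forall>u\<in>C. \<forall>v\<in>C. reach_in E C u v)"

definition num_components :: "('a \<Rightarrow> 'a \<Rightarrow> bool) \<Rightarrow> 'a set \<Rightarrow> nat" where
  "num_components E S = card ((\<lambda>v. {u \<in> S. reach_in E S v u}) ` S)"

definition cut_vertex :: "'a set \<Rightarrow> ('a \<Rightarrow> 'a \<Rightarrow> bool) \<Rightarrow> 'a \<Rightarrow> bool" where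
  "cut_vertex V E v \<longleftrightarrow> v \<in> V \<and> num_components E (V - {v}) > num_components E V"

definition nRel :: "'a set \<Rightarrow> ('a \<Rightarrow> 'a \<Rightarrow> bool) \<Rightarrow> real \<Rightarrow> real" where
  "nRel V E p = (\<Sum>C\<in>{C. C \<subseteq> V \<and> connected_set E C}.
                   p ^ card C * (1 - p) ^ (card V - card C))"

end

theory Submission
  imports Defs
begin

lemma total_weight:
  fixes p :: real
  assumes "finite V"
  shows "(\<Sum>S\<in>Pow V. p ^ card S * (1 - p) ^ (card V - card S)) = 1"
proof -
  have "(\<Prod>x\<in>V. p + (1 - p)) = (\<Sum>X\<in>Pow V. (\<Prod>x\<in>X. p) * (\<Prod>x\<in>V-X. (1 - p)))"
    using prod_add[OF assms, of "\<lambda>_. p" "\<lambda>_. 1 - p"] by simp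
  also have "\<dots> = (\<Sum>S\<in>Pow V. p ^ card S * (1 - p) ^ (card V - card S))"
  proof (rule sum.cong)
    fix S assume "S \<in> Pow V"
    then have "S \<subseteq> V" by auto
    then have "card (V - S) = card V - card S"
      using assms by (meson card_Diff_subset finite_subset)
    then show "(\<Prod>x\<in>S. p) * (\<Prod>x\<in>V-S. (1 - p)) = p ^ card S * (1 - p) ^ (card V - card S)"
      by simp
  qed simp
  finally show ?thesis by simp
qed

lemma reach_refl: "reach_in E S x x"
  unfolding reach_in_def by simp

lemma singleton_connected: "connected_set E {v}"
  unfolding connected_set_def using reach_refl by auto

lemma num_comp_pos:
  assumes "finite S" "S \<noteq> {}"
  shows "num_components E S \<ge> 1"
  unfolding num_components_def using assms
  by (simp add: Suc_le_eq card_gt_0_iff)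

lemma num_comp_conn:
  assumes "connected_set E S"
  shows "num_components E S = 1"
proof -
  have "(\<lambda>v. {u \<in> S. reach_in E S v u}) ` S = {S}"
    using assms unfolding connected_set_def
    by (auto simp: reach_in_def)
  then show ?thesis unfolding num_components_def by simp
qed

lemma cut_not_connected:
  assumes "finite V" "cut_vertex V E v"
  shows "\<not> connected_set E (V - {v})"
proof
  assume c: "connected_set E (V - {v})"
  have "v \<in> V" using assms(2) unfolding cut_vertex_def by auto
  then have "num_components E V \<ge> 1" using num_comp_pos assms(1) by blast
  moreover have "num_components E (V - {v}) = 1" using num_comp_conn[OF c] .
  ultimately show False using assms(2) unfolding cut_vertex_def by simp
qed

theorem corollary4p2:
  fixes V :: "'a set" and E :: "'a \<Rightarrow> 'a \<Rightarrow> bool"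
  assumes "simple_graph V E"
    and "card {v \<in> V. cut_vertex V E v} \<ge> 2"
  shows "\<exists>p::real. 0 < p \<and> p < 1 \<and> nRel V E p = p"
proof -
  have fin: "finite V" using assms(1) simple_graph_def by auto
  define n where "n = card V"
  define T where "T = {v \<in> V. cut_vertex V E v}"
  define A where "A = {C. C \<subseteq> V \<and> connected_set E C}"
  define w where "w = (\<lambda>(p::real) (S::'a set). p ^ card S * (1 - p) ^ (n - card S))"
  have TV: "T \<subseteq> V" unfolding T_def by auto
  have t2: "card T \<ge> 2" using assms(2) T_def by simp
  have n2: "n \<ge> 2" using card_mono[OF fin TV] t2 n_def by simp
  have nrel: "nRel V E p = sum (w p) A" for p
    unfolding nRel_def A_def w_def n_def by simp
  have wnn: "w p S \<ge> 0" if "0 \<le> p" "p \<le> 1" for p S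
    unfolding w_def using that by simp
  have finA: "finite A" unfolding A_def using fin by (simp add: finite_subset)
  have lower: "nRel V E p \<ge> n * p * (1 - p) ^ (n - 1)" if "0 \<le> p" "p \<le> 1" for p :: real
  proof -
    have sub: "(\<lambda>v. {v}) ` V \<subseteq> A" unfolding A_def using singleton_connected by auto
    have "sum (w p) ((\<lambda>v. {v}) ` V) = (\<Sum>v\<in>V. w p {v})"
      by (subst sum.reindex) (auto simp: inj_on_def)
    also have "\<dots> = n * p * (1 - p) ^ (n - 1)" unfolding w_def n_def by simp
    finally have "sum (w p) ((\<lambda>v. {v}) ` V) = n * p * (1 - p) ^ (n - 1)" .
    moreover have "sum (w p) ((\<lambda>v. {v}) ` V) \<le> sum (w p) A"
      using sum_mono2[OF finA sub] wnn[OF that] by blast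
    ultimately show ?thesis using nrel by simp
  qed
  have upper: "nRel V E p \<le> 1 - card T * p ^ (n - 1) * (1 - p)" if "0 \<le> p" "p \<le> 1" for p :: real
  proof -
    have finP: "finite (Pow V)" using fin by simp
    have AP: "A \<subseteq> Pow V" unfolding A_def by auto
    have tot: "sum (w p) (Pow V) = 1" using total_weight[OF fin, of p] unfolding w_def n_def .
    have split: "sum (w p) (Pow V) = sum (w p) A + sum (w p) (Pow V - A)"
      using sum.subset_diff[OF AP finP, of "w p"] by simp
    have sub: "(\<lambda>v. V - {v}) ` T \<subseteq> Pow V - A"
      using cut_not_connected[OF fin] unfolding A_def T_def by auto
    have inj: "inj_on (\<lambda>v. V - {v}) T"
      using TV by (auto simp: inj_on_def)
    have "sum (w p) ((\<lambda>v. V - {v}) ` T) = (\<Sum>v\<in>T. w p (V - {v}))"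
      using sum.reindex[OF inj] by simp
    also have "\<dots> = (\<Sum>v\<in>T. p ^ (n - 1) * (1 - p))"
    proof (rule sum.cong)
      fix v assume "v \<in> T"
      then have "v \<in> V" using TV by auto
      then have "card (V - {v}) = n - 1" using fin n_def by simp
      moreover have "n - (n - 1) = 1" using n2 by simp
      ultimately show "w p (V - {v}) = p ^ (n - 1) * (1 - p)" unfolding w_def by simp
    qed simp
    also have "\<dots> = card T * p ^ (n - 1) * (1 - p)" by simp
    finally have eq: "sum (w p) ((\<lambda>v. V - {v}) ` T) = card T * p ^ (n - 1) * (1 - p)" .
    have "sum (w p) ((\<lambda>v. V - {v}) ` T) \<le> sum (w p) (Pow V - A)"
      using sum_mono2[OF _ sub] finP wnn[OF that] by blast
    then show ?thesis using eq tot split nrel by simp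
  qed
  define p0 :: real where "p0 = 1 / (real n)^2"
  define p1 :: real where "p1 = 1 - 1 / (2 * real n)"
  have nr: "real n \<ge> 2" using n2 by simp
  have sq: "real n * real n \<ge> 4" using mult_mono[OF nr nr] by simp
  have p0pos: "0 < p0" and p0le: "p0 \<le> 1/4" unfolding p0_def using nr sq
    by (auto simp: field_simps power2_eq_square)
  have p1ge: "p1 \<ge> 3/4" and p1lt: "p1 < 1" unfolding p1_def using nr by (auto simp: field_simps)
  have f0: "nRel V E p0 - p0 \<ge> 0"
  proof -
    have b: "1 + real (n - 1) * (- p0) \<le> (1 + - p0) ^ (n - 1)"
      by (rule Bernoulli_inequality) (use p0le in simp)
    have "real (n - 1) = real n - 1" using n2 by simp
    then have b2: "1 - (real n - 1) * p0 \<le> (1 - p0) ^ (n - 1)" using b by simp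
    have "(real n - 1) * p0 \<le> 1/2"
    proof -
      have "(real n - 1) * p0 \<le> real n * p0" using p0pos by simp
      also have "\<dots> = 1 / real n" unfolding p0_def using nr by (simp add: power2_eq_square)
      also have "\<dots> \<le> 1/2" using nr by (simp add: field_simps)
      finally show ?thesis .
    qed
    then have "(1 - p0) ^ (n - 1) \<ge> 1/2" using b2 by linarith
    then have "real n * (1 - p0) ^ (n - 1) \<ge> 1" using nr
      mult_mono[of 2 "real n" "1/2" "(1 - p0) ^ (n - 1)"] by simp
    then have "p0 * 1 \<le> p0 * (real n * (1 - p0) ^ (n - 1))" using p0pos
      by (intro mult_left_mono) auto
    then have "p0 \<le> real n * p0 * (1 - p0) ^ (n - 1)" by (simp add: mult_ac)
    moreover have "real n * p0 * (1 - p0) ^ (n - 1) \<le> nRel V E p0"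
      using lower[of p0] p0pos p0le by simp
    ultimately show ?thesis by linarith
  qed
  have f1: "nRel V E p1 - p1 \<le> 0"
  proof -
    have b: "1 + real (n - 1) * (- (1 / (2 * real n))) \<le> (1 + - (1 / (2 * real n))) ^ (n - 1)"
      by (rule Bernoulli_inequality) (use nr in simp)
    have "real (n - 1) = real n - 1" using n2 by simp
    then have b2: "1 - (real n - 1) / (2 * real n) \<le> p1 ^ (n - 1)" using b unfolding p1_def by simp
    have "(real n - 1) / (2 * real n) \<le> 1/2" using nr by (simp add: field_simps)
    then have h: "p1 ^ (n - 1) \<ge> 1/2" using b2 by linarith
    have ct: "real (card T) \<ge> 2" using t2 by simp
    have "real (card T) * p1 ^ (n - 1) \<ge> 1" using ct h
      mult_mono[of 2 "real (card T)" "1/2" "p1 ^ (n - 1)"] by simp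
    then have "1 * (1 - p1) \<le> real (card T) * p1 ^ (n - 1) * (1 - p1)" using p1lt
      by (intro mult_right_mono) auto
    then have "1 - p1 \<le> real (card T) * p1 ^ (n - 1) * (1 - p1)" by simp
    moreover have "nRel V E p1 \<le> 1 - real (card T) * p1 ^ (n - 1) * (1 - p1)"
      using upper[of p1] p1lt p1ge by simp
    ultimately show ?thesis by linarith
  qed
  have cont: "continuous_on {p0..p1} (\<lambda>p. nRel V E p - p)"
    unfolding nRel_def by (intro continuous_intros)
  obtain x where x: "p0 \<le> x" "x \<le> p1" "nRel V E x - x = 0"
    using IVT2'[of "\<lambda>p. nRel V E p - p" p1 0 p0, OF f1 f0 _ cont] p0le p1ge by auto
  then show ?thesis using p0pos p1lt by (intro exI[of _ x]) auto
qed

end
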